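(* Let $X\in\mathbb{R}^{d\times m}$ and $Y\in\mathbb{R}^{d\times n}$ satisfy $\mathrm{Span}(X)\cap\mathrm{Span}(Y)=\{0\}$. Then $$u^\intercal(XX^\intercal+YY^\intercal)^\dagger v=\begin{cases}u^\intercal(XX^\intercal)^\dagger v,& u,v\in\mathrm{Span}(X),\\ 0,& u\in\mathrm{Span}(X),\ v\in\mathrm{Span}(Y),\\ u^\intercal(YY^\intercal)^\dagger v,& u,v\in\mathrm{Span}(Y).\end{cases}$$
   Context: $\mathrm{Span}(X)$ is the column space of $X$; $A^\dagger$ is the Moore–Penrose pseudo-inverse. *)

theory Defs
  imports "HOL-Analysis.Analysis"
begin

definition pinv :: "real^'n^'m \<Rightarrow> real^'m^'n" where
  "pinv A = (THE B. A ** B ** A = A \<and> B ** A ** B = B \<and>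
                    transpose (A ** B) = A ** B \<and> transpose (B ** A) = B ** A)"

definition col_span :: "real^'n^'m \<Rightarrow> (real^'m) set" where
  "col_span A = range (\<lambda>x. A *v x)"

end

theory Submission
  imports Defs
begin

lemma inner_mv: "((A::real^'n^'m) *v x) \<bullet> y = x \<bullet> (transpose A *v y)"
  by (metis dot_lmul_matrix inner_commute transpose_matrix_vector)

lemma transpose_eq_if:
  fixes M :: "real^'n^'n"
  assumes "\<And>x y. (M *v x) \<bullet> y = x \<bullet> (M *v y)"
  shows "transpose M = M"
proof -
  have "transpose M *v y = M *v y" for y
  proof -
    have "x \<bullet> (transpose M *v y) = x \<bullet> (M *v y)" for x
      by (metis assms inner_mv)
    then have "\<forall>x. x \<bullet> (transpose M *v y - M *v y) = 0"
      by (simp add: inner_diff_right)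
    then show ?thesis by (metis inner_eq_zero_iff right_minus_eq)
  qed
  then show ?thesis by (simp add: matrix_eq)
qed

lemma proj_exists:
  fixes A :: "real^'n^'m"
  shows "\<exists>G::real^'m^'n. (\<forall>y. G *v y \<in> col_span (transpose A)) \<and>
     (\<forall>z\<in>col_span (transpose A). G *v (A *v z) = z) \<and> A ** G ** A = A \<and>
     transpose (G ** A) = G ** A"
proof -
  define S where "S = col_span (transpose A)"
  have subS: "subspace S" unfolding S_def col_span_def
    using linear_subspace_image[OF matrix_vector_mul_linear[of "transpose A"] subspace_UNIV] by (simp del: transpose_matrix_vector)
  have spS: "vec.span S = S" using subS by (simp add: span_vec_eq)
  have Sin: "\<And>e. transpose A *v e \<in> S" unfolding S_def col_span_def by auto
  have inj: "inj_on ((*v) A) (vec.span S)"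
  proof (rule inj_onI)
    fix x y assume x: "x \<in> vec.span S" and y: "y \<in> vec.span S" and eq: "A *v x = A *v y"
    have "x - y \<in> S" using x y spS subS by (simp add: subspace_diff)
    then obtain e where e: "x - y = transpose A *v e" unfolding S_def col_span_def by auto
    have Ad: "A *v (x - y) = 0" using eq by (simp add: matrix_vector_mult_diff_distrib)
    have "(x - y) \<bullet> (x - y) = e \<bullet> (A *v (x - y))"
      by (metis e inner_mv inner_commute transpose_transpose)
    then have "(x - y) \<bullet> (x - y) = 0" using Ad by simp
    then show "x = y" by simp
  qed
  obtain g where rg: "range g \<subseteq> vec.span S" and lg: "Vector_Spaces.linear (*s) (*s) g"
    and gi: "\<forall>x\<in>vec.span S. g (A *v x) = x"
    using vec.linear_inj_on_left_inverse[OF matrix_vector_mul_linear_gen inj] by blast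
  define G where "G = matrix g"
  have Gv: "G *v y = g y" for y unfolding G_def by (simp add: matrix_works[OF lg])
  have decomp: "\<exists>x1 x2. x1 \<in> S \<and> (\<forall>w\<in>S. orthogonal x2 w) \<and> x = x1 + x2" for x
    using orthogonal_subspace_decomp_exists[of S x] subS by (metis span_eq_iff)
  have A0: "A *v x2 = 0" if "\<forall>w\<in>S. orthogonal x2 w" for x2
  proof -
    have "(A *v x2) \<bullet> (A *v x2) = x2 \<bullet> (transpose A *v (A *v x2))" by (rule inner_mv)
    also have "\<dots> = 0" using that Sin by (simp add: orthogonal_def)
    finally show ?thesis by simp
  qed
  have GA: "G *v (A *v x) = x1" if "x1 \<in> S" "\<forall>w\<in>S. orthogonal x2 w" "x = x1 + x2" for x x1 x2
    using that A0[OF that(2)] gi spS Gv by (simp add: matrix_vector_right_distrib)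
  have c: "A ** G ** A = A"
  proof -
    have "(A ** G ** A) *v x = A *v x" for x
    proof -
      obtain x1 x2 where d: "x1 \<in> S" "\<forall>w\<in>S. orthogonal x2 w" "x = x1 + x2" using decomp by blast
      have "(A ** G ** A) *v x = A *v x1" using GA[OF d] by (simp add: matrix_vector_mul_assoc[symmetric])
      also have "\<dots> = A *v x" using d A0[OF d(2)] by (simp add: matrix_vector_right_distrib)
      finally show ?thesis .
    qed
    then show ?thesis by (simp add: matrix_eq)
  qed
  have d: "transpose (G ** A) = G ** A"
  proof (rule transpose_eq_if)
    fix x y
    obtain x1 x2 where dx: "x1 \<in> S" "\<forall>w\<in>S. orthogonal x2 w" "x = x1 + x2" using decomp by blast
    obtain y1 y2 where dy: "y1 \<in> S" "\<forall>w\<in>S. orthogonal y2 w" "y = y1 + y2" using decomp by blast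
    have "((G ** A) *v x) \<bullet> y = x1 \<bullet> y1"
      using GA[OF dx] dx dy by (simp add: matrix_vector_mul_assoc[symmetric] inner_add_right orthogonal_def inner_commute)
    moreover have "x \<bullet> ((G ** A) *v y) = x1 \<bullet> y1"
      proof -
      have o: "x2 \<bullet> y1 = 0" using dx(2) dy(1) unfolding orthogonal_def by (metis inner_commute)
      show ?thesis using GA[OF dy] dx o by (simp add: matrix_vector_mul_assoc[symmetric] inner_add_left)
    qed
    ultimately show "((G ** A) *v x) \<bullet> y = x \<bullet> ((G ** A) *v y)" by simp
  qed
  have a: "\<forall>y. G *v y \<in> S" using rg spS Gv by auto
  have b: "\<forall>z\<in>S. G *v (A *v z) = z" using gi spS Gv by auto
  show ?thesis using a b c d unfolding S_def by blast
qed


definition penrose :: "real^'n^'m \<Rightarrow> real^'m^'n \<Rightarrow> bool" where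
  "penrose A B \<longleftrightarrow> A ** B ** A = A \<and> B ** A ** B = B \<and>
                    transpose (A ** B) = A ** B \<and> transpose (B ** A) = B ** A"

lemma penrose_exists: "\<exists>B. penrose (A::real^'n^'m) B"
proof -
  obtain G :: "real^'m^'n" where Ga: "\<forall>y. G *v y \<in> col_span (transpose A)"
    and Gb: "\<forall>z\<in>col_span (transpose A). G *v (A *v z) = z" and Gc: "A ** G ** A = A"
    and Gd: "transpose (G ** A) = G ** A" using proj_exists[of A] by blast
  obtain H :: "real^'n^'m" where Ha: "\<forall>y. H *v y \<in> col_span A"
    and Hc: "transpose A ** H ** transpose A = transpose A"
    and Hd: "transpose (H ** transpose A) = H ** transpose A"
    using proj_exists[of "transpose A"] by auto
  define B where "B = G ** H ** transpose A"
  have HAA: "H ** transpose A ** A = A"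
  proof -
    have "H ** transpose A = A ** transpose H" using Hd by (simp add: matrix_transpose_mul)
    then have "H ** transpose A ** A = A ** transpose H ** A" by simp
    also have "\<dots> = transpose (transpose A ** H ** transpose A)"
      by (simp add: matrix_transpose_mul matrix_mul_assoc)
    also have "\<dots> = A" using Hc by simp
    finally show ?thesis .
  qed
  have AGH: "A ** G ** H = H"
  proof -
    have "(A ** G ** H) *v y = H *v y" for y
    proof -
      obtain x where x: "H *v y = A *v x" using Ha[rule_format, of y] unfolding col_span_def by auto
      have "(A ** G ** H) *v y = (A ** G ** A) *v x" using x by (simp add: matrix_vector_mul_assoc[symmetric])
      then show ?thesis using Gc x by simp
    qed
    then show ?thesis by (simp add: matrix_eq)
  qed
  have GAG: "G ** A ** G = G"
  proof -
    have "(G ** A ** G) *v y = G *v y" for y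
      using Gb Ga by (simp add: matrix_vector_mul_assoc[symmetric] del: transpose_matrix_vector)
    then show ?thesis by (simp add: matrix_eq)
  qed
  have AB: "A ** B = H ** transpose A" unfolding B_def using AGH by (simp add: matrix_mul_assoc)
  have BA: "B ** A = G ** A" unfolding B_def using HAA by (simp add: matrix_mul_assoc[symmetric])
  have "penrose A B" unfolding penrose_def
  proof (intro conjI)
    show "A ** B ** A = A" using AB HAA by simp
    show "B ** A ** B = B" using BA GAG unfolding B_def by (simp add: matrix_mul_assoc)
    show "transpose (A ** B) = A ** B" using AB Hd by simp
    show "transpose (B ** A) = B ** A" using BA Gd by simp
  qed
  then show ?thesis by blast
qed

lemma penrose_unique:
  assumes "penrose A B" "penrose A C" shows "B = C"
proof -
  have 1: "A ** B ** A = A" "B ** A ** B = B" "transpose (A ** B) = A ** B" "transpose (B ** A) = B ** A"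
    using assms(1) unfolding penrose_def by auto
  have 2: "A ** C ** A = A" "C ** A ** C = C" "transpose (A ** C) = A ** C" "transpose (C ** A) = C ** A"
    using assms(2) unfolding penrose_def by auto
  have "B = B ** transpose (A ** B)" using 1 by (simp add: matrix_mul_assoc)
  also have "\<dots> = B ** transpose B ** transpose (A ** C ** A)" using 2 by (simp add: matrix_transpose_mul matrix_mul_assoc)
  also have "\<dots> = B ** transpose (A ** B) ** transpose (A ** C)" by (simp add: matrix_transpose_mul matrix_mul_assoc)
  also have "\<dots> = B ** A ** C" using 1 2 by (simp add: matrix_mul_assoc)
  finally have b: "B = B ** A ** C" .
  have "C = transpose (C ** A) ** C" using 2 by (simp add: matrix_mul_assoc)
  also have "\<dots> = transpose (A ** B ** A) ** transpose C ** C" using 1 by (simp add: matrix_transpose_mul matrix_mul_assoc)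
  also have "\<dots> = transpose (B ** A) ** transpose (C ** A) ** C" by (simp add: matrix_transpose_mul matrix_mul_assoc)
  also have "\<dots> = (B ** A) ** (C ** A ** C)" by (simp only: 1(4) 2(4) matrix_mul_assoc)
  also have "\<dots> = B ** A ** C" using 2 by simp
  finally show ?thesis using b by simp
qed

lemma pinv_penrose: "penrose A (pinv A)"
proof -
  have "pinv A = (THE B. penrose A B)" unfolding pinv_def penrose_def by simp
  moreover have "\<exists>!B. penrose A B" using penrose_exists penrose_unique by blast
  ultimately show ?thesis by (metis theI')
qed


declare transpose_matrix_vector [simp del]

lemma inner_sym: "transpose (S::real^'n^'n) = S \<Longrightarrow> (S *v x) \<bullet> y = x \<bullet> (S *v y)"
  by (metis inner_mv)

lemma transpose_add': "transpose (A + B) = transpose A + transpose (B::real^'n^'m)"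
  by (simp add: transpose_def vec_eq_iff)

lemma quad_form: "z \<bullet> ((X ** transpose X) *v z) = (transpose X *v z) \<bullet> (transpose X *v z)"
  for X :: "real^'m^'d"
  by (metis inner_commute inner_mv matrix_vector_mul_assoc transpose_transpose)

lemma null_single: "(X ** transpose X) *v z = 0 \<Longrightarrow> transpose X *v z = 0"
  for X :: "real^'m^'d"
  using quad_form[of z X] by simp

lemma null_sum:
  fixes X :: "real^'m^'d" and Y :: "real^'n^'d"
  assumes "(X ** transpose X + Y ** transpose Y) *v z = 0"
  shows "transpose X *v z = 0"
proof -
  have "z \<bullet> ((X ** transpose X + Y ** transpose Y) *v z) =
     (transpose X *v z) \<bullet> (transpose X *v z) + (transpose Y *v z) \<bullet> (transpose Y *v z)"
    using quad_form[of z X] quad_form[of z Y] by (simp add: matrix_vector_mult_add_rdistrib inner_add_right)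
  then have "(transpose X *v z) \<bullet> (transpose X *v z) + (transpose Y *v z) \<bullet> (transpose Y *v z) = 0"
    using assms by simp
  moreover have "0 \<le> (transpose Y *v z) \<bullet> (transpose Y *v z)" "0 \<le> (transpose X *v z) \<bullet> (transpose X *v z)" by simp_all
  ultimately have "(transpose X *v z) \<bullet> (transpose X *v z) = 0" by linarith
  then show ?thesis by simp
qed

lemma proj_fix:
  fixes P M :: "real^'d^'d" and X :: "real^'m^'d"
  assumes sP: "transpose P = P" and MP: "\<And>x. M *v (P *v x) = M *v x"
    and nul: "\<And>z. M *v z = 0 \<Longrightarrow> transpose X *v z = 0"
  shows "P ** X = X"
proof -
  have XP: "transpose X *v (P *v x) = transpose X *v x" for x
  proof -
    have "M *v (x - P *v x) = 0" using MP by (simp add: matrix_vector_mult_diff_distrib)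
    then have "transpose X *v (x - P *v x) = 0" by (rule nul)
    then show ?thesis by (simp add: matrix_vector_mult_diff_distrib)
  qed
  have "(P ** X) *v w = X *v w" for w
  proof -
    have "x \<bullet> ((P ** X) *v w) = x \<bullet> (X *v w)" for x
    proof -
      have "x \<bullet> ((P ** X) *v w) = (P *v x) \<bullet> (X *v w)"
        using inner_sym[OF sP] by (simp add: matrix_vector_mul_assoc[symmetric])
      also have "\<dots> = (X *v w) \<bullet> (P *v x)" by (simp add: inner_commute)
      also have "\<dots> = w \<bullet> (transpose X *v (P *v x))" by (rule inner_mv)
      also have "\<dots> = w \<bullet> (transpose X *v x)" by (simp add: XP)
      also have "\<dots> = x \<bullet> (X *v w)" by (metis inner_commute inner_mv)
      finally show ?thesis .
    qed
    then have "((P ** X) *v w - X *v w) \<bullet> ((P ** X) *v w - X *v w) = 0"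
      by (simp add: inner_diff_left inner_diff_right)
    then show ?thesis by simp
  qed
  then show ?thesis by (simp add: matrix_eq)
qed


lemma cases12:
  fixes X :: "real^'m^'d" and Y :: "real^'n^'d"
  assumes disj: "col_span X \<inter> col_span Y = {0}"
  shows "u \<in> col_span X \<Longrightarrow> v \<in> col_span X \<Longrightarrow>
      u \<bullet> (pinv (X ** transpose X + Y ** transpose Y) *v v) = u \<bullet> (pinv (X ** transpose X) *v v)"
    and "u \<in> col_span X \<Longrightarrow> v \<in> col_span Y \<Longrightarrow>
      u \<bullet> (pinv (X ** transpose X + Y ** transpose Y) *v v) = 0"
proof -
  define M where "M = X ** transpose X + Y ** transpose Y"
  define A where "A = X ** transpose X"
  define G where "G = pinv M"
  define GA where "GA = pinv A"
  have pG: "M ** G ** M = M" "transpose (M ** G) = M ** G"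
    using pinv_penrose[of M] unfolding G_def penrose_def by auto
  have pA: "A ** GA ** A = A" "transpose (GA ** A) = GA ** A"
    using pinv_penrose[of A] unfolding GA_def penrose_def by auto
  have symM: "transpose M = M" unfolding M_def by (simp add: transpose_add' matrix_transpose_mul)
  have MMG: "M *v ((M ** G) *v x) = M *v x" for x
  proof -
    have "y \<bullet> (M *v ((M ** G) *v x)) = y \<bullet> (M *v x)" for y
    proof -
      have "y \<bullet> (M *v ((M ** G) *v x)) = (M *v y) \<bullet> ((M ** G) *v x)" using inner_sym[OF symM] by simp
      also have "\<dots> = ((M ** G) *v (M *v y)) \<bullet> x" using inner_sym[OF pG(2)] by simp
      also have "\<dots> = (M *v y) \<bullet> x" using pG(1) by (simp add: matrix_vector_mul_assoc)
      also have "\<dots> = y \<bullet> (M *v x)" using inner_sym[OF symM] by simp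
      finally show ?thesis .
    qed
    then have "(M *v ((M ** G) *v x) - M *v x) \<bullet> (M *v ((M ** G) *v x) - M *v x) = 0"
      by (simp add: inner_diff_left inner_diff_right)
    then show ?thesis by simp
  qed
  have nX: "M *v z = 0 \<Longrightarrow> transpose X *v z = 0" for z unfolding M_def by (rule null_sum)
  have nY: "M *v z = 0 \<Longrightarrow> transpose Y *v z = 0" for z unfolding M_def
    using null_sum[where X=Y and Y=X and z=z] by (simp add: add.commute)
  have MGX: "(M ** G) ** X = X" by (rule proj_fix[OF pG(2) MMG nX])
  have MGY: "(M ** G) ** Y = Y" by (rule proj_fix[OF pG(2) MMG nY])
  have AGA: "A *v ((GA ** A) *v x) = A *v x" for x
    using pA(1) by (simp add: matrix_vector_mul_assoc matrix_mul_assoc)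
  have GAX: "(GA ** A) ** X = X" by (rule proj_fix[OF pA(2) AGA]) (simp add: A_def null_single)
  have Mw: "M *v w = X *v (transpose X *v w) + Y *v (transpose Y *v w)" for w
    unfolding M_def by (simp add: matrix_vector_mult_add_rdistrib matrix_vector_mul_assoc)
  have inter0: "Y *v q = 0" if "X *v p = Y *v q" for p q
  proof -
    have "Y *v q \<in> col_span X \<inter> col_span Y" unfolding col_span_def using that by (metis IntI rangeI)
    then show ?thesis using disj by simp
  qed
  show "u \<bullet> (pinv (X ** transpose X + Y ** transpose Y) *v v) = u \<bullet> (pinv (X ** transpose X) *v v)"
    if u: "u \<in> col_span X" and v: "v \<in> col_span X"
  proof -
    obtain a where a: "u = X *v a" using u unfolding col_span_def by auto
    obtain b where b: "v = X *v b" using v unfolding col_span_def by auto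
    define w where "w = G *v v"
    have "M *v w = v" unfolding w_def b by (metis MGX matrix_vector_mul_assoc)
    then have "Y *v (transpose Y *v w) = X *v b - X *v (transpose X *v w)"
      using Mw[of w] b by (metis add_diff_cancel_left')
    then have "Y *v (transpose Y *v w) = X *v (b - transpose X *v w)"
      by (simp only: matrix_vector_mult_diff_distrib)
    then have "Y *v (transpose Y *v w) = 0" using inter0[of "b - transpose X *v w" "transpose Y *v w"] by metis
    then have Aw: "A *v w = v" using Mw[of w] \<open>M *v w = v\<close> unfolding A_def by (simp add: matrix_vector_mul_assoc)
    have "u \<bullet> (GA *v v) = u \<bullet> ((GA ** A) *v w)" using Aw by (simp add: matrix_vector_mul_assoc[symmetric])
    also have "\<dots> = ((GA ** A) *v u) \<bullet> w" using inner_sym[OF pA(2)] by simp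
    also have "(GA ** A) *v u = u" unfolding a by (metis GAX matrix_vector_mul_assoc)
    finally show ?thesis unfolding w_def G_def M_def GA_def A_def by simp
  qed
  show "u \<bullet> (pinv (X ** transpose X + Y ** transpose Y) *v v) = 0"
    if u: "u \<in> col_span X" and v: "v \<in> col_span Y"
  proof -
    obtain a where a: "u = X *v a" using u unfolding col_span_def by auto
    obtain c where c: "v = Y *v c" using v unfolding col_span_def by auto
    define w where "w = G *v v"
    have "M *v w = v" unfolding w_def c by (metis MGY matrix_vector_mul_assoc)
    then have "X *v (transpose X *v w) = Y *v c - Y *v (transpose Y *v w)"
      using Mw[of w] c by (metis add_diff_cancel_right')
    then have "X *v (transpose X *v w) = Y *v (c - transpose Y *v w)"
      by (simp only: matrix_vector_mult_diff_distrib)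
    then have "X *v (transpose X *v w) = 0" using inter0[of "transpose X *v w" "c - transpose Y *v w"] by metis
    then have "transpose X *v w = 0" using null_single[where X=X and z=w] by (simp add: matrix_vector_mul_assoc)
    then have "u \<bullet> w = 0" unfolding a by (simp add: inner_mv)
    then show ?thesis unfolding w_def G_def M_def by simp
  qed
qed

theorem lemma18:
  fixes X :: "real^'m^'d" and Y :: "real^'n^'d"
  assumes "col_span X \<inter> col_span Y = {0}"
  shows "\<forall>u v. (u \<in> col_span X \<and> v \<in> col_span X \<longrightarrow>
              u \<bullet> (pinv (X ** transpose X + Y ** transpose Y) *v v) = u \<bullet> (pinv (X ** transpose X) *v v))
          \<and> (u \<in> col_span X \<and> v \<in> col_span Y \<longrightarrow>
              u \<bullet> (pinv (X ** transpose X + Y ** transpose Y) *v v) = 0)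
          \<and> (u \<in> col_span Y \<and> v \<in> col_span Y \<longrightarrow>
              u \<bullet> (pinv (X ** transpose X + Y ** transpose Y) *v v) = u \<bullet> (pinv (Y ** transpose Y) *v v))"
proof (intro allI conjI impI)
  fix u v
  have a': "col_span Y \<inter> col_span X = {0}" using assms by blast
  show "u \<bullet> (pinv (X ** transpose X + Y ** transpose Y) *v v) = u \<bullet> (pinv (X ** transpose X) *v v)"
    if "u \<in> col_span X \<and> v \<in> col_span X" using that cases12(1)[OF assms] by blast
  show "u \<bullet> (pinv (X ** transpose X + Y ** transpose Y) *v v) = 0"
    if "u \<in> col_span X \<and> v \<in> col_span Y" using that cases12(2)[OF assms] by blast
  show "u \<bullet> (pinv (X ** transpose X + Y ** transpose Y) *v v) = u \<bullet> (pinv (Y ** transpose Y) *v v)"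
    if "u \<in> col_span Y \<and> v \<in> col_span Y" using that cases12(1)[OF a', of u v] by (simp add: add.commute)
qed

end
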